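(* Let $B_J\in\mathbb R^{n\times n}$ be irreducible with $B_J\ge O$ elementwise, let $\mathcal B=(B_1,\dots,B_d)$ be a splitting of $B_J$, and assume $\lambda:=\rho(T(\mathcal B))>0$. Then $T(\mathcal B)$ has an elementwise positive eigenvector $[\alpha_1^T,\dots,\alpha_d^T]^T$ for the eigenvalue $\lambda$ such that, elementwise, $0<\lambda\alpha_1\le\alpha_d\le\alpha_{d-1}\le\cdots\le\alpha_2\le\alpha_1$ if $\lambda\le1$, and $0<\alpha_1\le\alpha_2\le\cdots\le\alpha_{d-1}\le\alpha_d\le\lambda\alpha_1$ if $\lambda\ge1$.
   Context: For $B\in\mathbb R^{n\times n}$, a splitting of $B$ of order $d\ge1$ is an ordered $d$-tuple $\mathcal B=(B_1,\dots,B_d)$ of real $n\times n$ matrices with $B_p\neq O$ for all $p$, $\sum_{p=1}^d B_p=B$, and $B_p\circ B_q=O$ (Hadamard product) for $p\ne q$. The iteration matrix of $\mathcal B$ is the $dn\times dn$ matrix $T(\mathcal B)=(I_{dn}-\mathcal L)^{-1}\mathcal U$, where $\mathcal L,\mathcal U$ are $d\times d$ block matrices with $n\times n$ blocks, $\mathcal L_{ij}=B_j$ if $i>j$ and $O$ otherwise, $\mathcal U_{ij}=B_j$ if $i\le j$ and $O$ otherwise. $\rho$ denotes spectral radius; inequalities are elementwise. *)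

theory Defs
  imports "Jordan_Normal_Form.Spectral_Radius" "Jordan_Normal_Form.Gauss_Jordan_Elimination"
begin

(* Matrices are Jordan_Normal_Form matrices ('a mat) carrying their dimension.
   Row/column indices are 0-based (0..<n); splitting components are indexed 1..d
   as in the paper (Bs p for p in {1..d}). *)

definition nonneg_mat :: "real mat \<Rightarrow> bool" where
  "nonneg_mat A \<longleftrightarrow> (\<forall>i<dim_row A. \<forall>j<dim_col A. A $$ (i,j) \<ge> 0)"

(* Reducibility (Varga): for n >= 2, A is reducible iff there is a permutation P with
   P A P^T = [[A11, A12], [O, A22]] (square diagonal blocks of positive size);
   equivalently there is a nonempty proper subset S of the indices (the indices of the
   A22 block) with a_ij = 0 for all i in S, j not in S. *)
definition reducible_mat :: "nat \<Rightarrow> real mat \<Rightarrow> bool" where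
  "reducible_mat n A \<longleftrightarrow>
     (n = 1 \<and> A = 0\<^sub>m 1 1) \<or>
     (n \<ge> 2 \<and> (\<exists>S. S \<noteq> {} \<and> S \<subset> {..<n} \<and>
                    (\<forall>i\<in>S. \<forall>j\<in>{..<n} - S. A $$ (i,j) = 0)))"

definition irreducible_mat :: "nat \<Rightarrow> real mat \<Rightarrow> bool" where
  "irreducible_mat n A \<longleftrightarrow> A \<in> carrier_mat n n \<and> \<not> reducible_mat n A"

definition hadamard_mat :: "real mat \<Rightarrow> real mat \<Rightarrow> real mat" where
  "hadamard_mat A B = mat (dim_row A) (dim_col A) (\<lambda>(i,j). A $$ (i,j) * B $$ (i,j))"

definition is_splitting :: "nat \<Rightarrow> nat \<Rightarrow> real mat \<Rightarrow> (nat \<Rightarrow> real mat) \<Rightarrow> bool" where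
  "is_splitting n d B Bs \<longleftrightarrow>
     d \<ge> 1 \<and> B \<in> carrier_mat n n \<and>
     (\<forall>p\<in>{1..d}. Bs p \<in> carrier_mat n n \<and> Bs p \<noteq> 0\<^sub>m n n) \<and>
     B = mat n n (\<lambda>(i,j). \<Sum>p=1..d. Bs p $$ (i,j)) \<and>
     (\<forall>p\<in>{1..d}. \<forall>q\<in>{1..d}. p \<noteq> q \<longrightarrow> hadamard_mat (Bs p) (Bs q) = 0\<^sub>m n n)"

(* Block matrices L and U (d x d blocks of size n x n).  Global index i < d*n lies in
   block row i div n + 1 (1-based) at local row i mod n. *)
definition block_L :: "nat \<Rightarrow> nat \<Rightarrow> (nat \<Rightarrow> real mat) \<Rightarrow> real mat" where
  "block_L n d Bs = mat (d*n) (d*n) (\<lambda>(i,j).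
      if i div n > j div n then Bs (j div n + 1) $$ (i mod n, j mod n) else 0)"

definition block_U :: "nat \<Rightarrow> nat \<Rightarrow> (nat \<Rightarrow> real mat) \<Rightarrow> real mat" where
  "block_U n d Bs = mat (d*n) (d*n) (\<lambda>(i,j).
      if i div n \<le> j div n then Bs (j div n + 1) $$ (i mod n, j mod n) else 0)"

(* iteration matrix T(B) = (I - L)^{-1} U  (I - L is unit lower triangular, hence invertible) *)
definition iter_mat :: "nat \<Rightarrow> nat \<Rightarrow> (nat \<Rightarrow> real mat) \<Rightarrow> real mat" where
  "iter_mat n d Bs = the (mat_inverse (1\<^sub>m (d*n) - block_L n d Bs)) * block_U n d Bs"

definition rho :: "real mat \<Rightarrow> real" where
  "rho A = spectral_radius (map_mat complex_of_real A)"

definition block_vec :: "nat \<Rightarrow> real vec \<Rightarrow> nat \<Rightarrow> real vec" where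
  "block_vec n x p = vec n (\<lambda>i. x $ ((p - 1) * n + i))"

definition vle :: "nat \<Rightarrow> real vec \<Rightarrow> real vec \<Rightarrow> bool" where
  "vle n u v \<longleftrightarrow> (\<forall>i<n. u $ i \<le> v $ i)"

end

theory Submission
  imports Defs
begin



lemma mv_entry:
  assumes "A \<in> carrier_mat N M" "v \<in> carrier_vec M" "i < N"
  shows "(A *\<^sub>v v) $ i = (\<Sum>j<M. A $$ (i,j) * v $ j)"
  using assms by (auto simp: scalar_prod_def atLeast0LessThan intro!: sum.cong)

lemma smult_mat_vec:
  assumes "A \<in> carrier_mat nr nc" "v \<in> carrier_vec nc"
  shows "(k \<cdot>\<^sub>m A) *\<^sub>v v = k \<cdot>\<^sub>v (A *\<^sub>v v)"
  using assms by (intro eq_vecI) (auto simp: scalar_prod_def sum_distrib_left ac_simps)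

lemma mv_mono:
  assumes A: "A \<in> carrier_mat N N" "nonneg_mat A"
    and uv: "u \<in> carrier_vec N" "v \<in> carrier_vec N" "\<forall>j<N. u $ j \<le> v $ j" and i: "i < N"
  shows "(A *\<^sub>v u) $ i \<le> (A *\<^sub>v v) $ i"
proof -
  have "(\<Sum>j<N. A $$ (i,j) * u $ j) \<le> (\<Sum>j<N. A $$ (i,j) * v $ j)"
    using A uv i by (intro sum_mono mult_left_mono) (auto simp: nonneg_mat_def)
  then show ?thesis using mv_entry[OF A(1) uv(1) i] mv_entry[OF A(1) uv(2) i] by simp
qed

lemma mv_nonneg:
  assumes A: "A \<in> carrier_mat N N" "nonneg_mat A"
    and u: "u \<in> carrier_vec N" "\<forall>j<N. 0 \<le> u $ j" and i: "i < N"
  shows "0 \<le> (A *\<^sub>v u) $ i"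
  using mv_entry[OF A(1) u(1) i] A u i
  by (auto simp: nonneg_mat_def intro!: sum_nonneg)

lemma rho_nonneg:
  assumes "A \<in> carrier_mat N N" "N > 0"
  shows "rho A \<ge> 0"
proof -
  have C: "map_mat complex_of_real A \<in> carrier_mat N N" using assms by auto
  from spectral_radius_mem_max(1)[OF C assms(2)] show ?thesis
    unfolding rho_def by auto
qed

lemma real_ev_le_rho:
  assumes A: "A \<in> carrier_mat N N" and N: "N > 0" and ev: "eigenvector A v t"
  shows "\<bar>t\<bar> \<le> rho A"
proof -
  have C: "map_mat complex_of_real A \<in> carrier_mat N N" using A by auto
  from of_real_hom.eigenvector_hom[OF A ev]
  have "eigenvalue (map_mat complex_of_real A) (complex_of_real t)"
    unfolding eigenvalue_def by auto
  hence "complex_of_real t \<in> spectrum (map_mat complex_of_real A)"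
    unfolding spectrum_def by auto
  from spectral_radius_mem_max(2)[OF C N imageI[OF this]]
  show ?thesis unfolding rho_def by simp
qed

lemma sub_inv:
  assumes A: "A \<in> carrier_mat N N" "nonneg_mat A"
    and w: "w \<in> carrier_vec N" "\<forall>i<N. w $ i \<ge> 0" "w \<noteq> 0\<^sub>v N"
    and s: "s > rho A"
    and ineq: "\<forall>i<N. (A *\<^sub>v w) $ i \<ge> s * w $ i"
  shows False
proof -
  from w obtain i0 where i0: "i0 < N" "w $ i0 \<noteq> 0" by (metis eq_vecI carrier_vecD index_zero_vec)
  hence N: "N > 0" by auto
  with w i0 have wi0: "w $ i0 > 0" by force
  have r0: "rho A \<ge> 0" using rho_nonneg[OF A(1) N] .
  define s' where "s' = (rho A + s) / 2"
  have s'0: "s' > 0" "s' > rho A" "s' < s" using r0 s unfolding s'_def by auto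
  define A' where "A' = (1 / s') \<cdot>\<^sub>m A"
  have A'c: "A' \<in> carrier_mat N N" unfolding A'_def using A by auto
  have A'nn: "nonneg_mat A'" using A s'0 unfolding A'_def nonneg_mat_def by auto
  define C where "C = map_mat complex_of_real A'"
  have C: "C \<in> carrier_mat N N" unfolding C_def using A'c by auto
  have "spectral_radius C < 1"
  proof -
    from spectral_radius_mem_max(1)[OF C N] obtain mu where
      mu: "mu \<in> spectrum C" "spectral_radius C = cmod mu" by auto
    from mu(1) obtain v where ev: "eigenvector C v mu" unfolding spectrum_def eigenvalue_def by auto
    have Ac: "map_mat complex_of_real A \<in> carrier_mat N N" using A by auto
    have eqA: "map_mat complex_of_real A = complex_of_real s' \<cdot>\<^sub>m C"
      unfolding C_def A'_def using A s'0 by (auto intro!: eq_matI)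
    from ev C have v: "v \<in> carrier_vec N" "v \<noteq> 0\<^sub>v N" "C *\<^sub>v v = mu \<cdot>\<^sub>v v"
      unfolding eigenvector_def by auto
    have "map_mat complex_of_real A *\<^sub>v v = (complex_of_real s' * mu) \<cdot>\<^sub>v v"
      unfolding eqA using C v by (simp add: smult_mat_vec smult_smult_assoc)
    hence "eigenvector (map_mat complex_of_real A) v (complex_of_real s' * mu)"
      unfolding eigenvector_def using v Ac by auto
    hence "complex_of_real s' * mu \<in> spectrum (map_mat complex_of_real A)"
      unfolding spectrum_def eigenvalue_def by auto
    from spectral_radius_mem_max(2)[OF Ac N imageI[OF this]]
    have "s' * cmod mu \<le> rho A" unfolding rho_def using s'0 by (simp add: norm_mult)
    with s'0 have "s' * cmod mu < s' * 1" by linarith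
    hence "cmod mu < 1" using s'0 by (metis mult_less_cancel_left_pos)
    thus ?thesis using mu by simp
  qed
  from spectral_radius_jnf_norm_bound_less_1_upper_triangular[OF C this]
  obtain c where c: "\<And>k. norm_bound (C ^\<^sub>m k) c" by auto
  have bnd: "\<And>k i j. i < N \<Longrightarrow> j < N \<Longrightarrow> \<bar>(A' ^\<^sub>m k) $$ (i,j)\<bar> \<le> c"
  proof -
    fix k i j assume ij: "i < N" "j < N"
    have "C ^\<^sub>m k = map_mat complex_of_real (A' ^\<^sub>m k)"
      unfolding C_def using of_real_hom.mat_hom_pow[OF A'c] by metis
    with c[of k] ij show "\<bar>(A' ^\<^sub>m k) $$ (i,j)\<bar> \<le> c" unfolding norm_bound_def
      using A'c by auto
  qed
  define r where "r = s / s'"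
  have r1: "r > 1" unfolding r_def using s'0 by auto
  have ineq': "\<forall>i<N. (A' *\<^sub>v w) $ i \<ge> r * w $ i"
  proof (intro allI impI)
    fix i assume i: "i < N"
    have "(A' *\<^sub>v w) $ i = (A *\<^sub>v w) $ i / s'" unfolding A'_def using A w i
      by (simp add: smult_mat_vec)
    also have "\<dots> \<ge> (s * w $ i) / s'" using ineq i s'0 by (simp add: divide_right_mono)
    finally show "(A' *\<^sub>v w) $ i \<ge> r * w $ i" unfolding r_def by simp
  qed
  have pow: "\<forall>i<N. (A' ^\<^sub>m k *\<^sub>v w) $ i \<ge> r ^ k * w $ i" for k
  proof (induction k)
    case 0
    then show ?case using w A'c by auto
  next
    case (Suc k)
    have Ak: "A' ^\<^sub>m k \<in> carrier_mat N N" using A'c by simp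
    have Aknn: "nonneg_mat (A' ^\<^sub>m k)"
    proof -
      have "nonneg_mat (A' ^\<^sub>m m)" for m
      proof (induction m)
        case 0 then show ?case by (auto simp: nonneg_mat_def one_mat_def)
      next
        case (Suc m)
        have Am: "A' ^\<^sub>m m \<in> carrier_mat N N" using A'c by simp
        show ?case unfolding nonneg_mat_def
        proof (intro allI impI)
          fix i j assume ij: "i < dim_row (A' ^\<^sub>m Suc m)" "j < dim_col (A' ^\<^sub>m Suc m)"
          hence ij': "i < N" "j < N" using A'c by auto
          have "(A' ^\<^sub>m Suc m) $$ (i,j) = row (A' ^\<^sub>m m) i \<bullet> col A' j" using Am A'c ij' by simp
          also have "\<dots> = (\<Sum>l<N. (A' ^\<^sub>m m) $$ (i,l) * A' $$ (l,j))"
            using Am A'c ij' by (auto simp: scalar_prod_def atLeast0LessThan intro!: sum.cong)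
          also have "\<dots> \<ge> 0" using Suc A'nn Am A'c ij' unfolding nonneg_mat_def
            by (intro sum_nonneg mult_nonneg_nonneg) auto
          finally show "(A' ^\<^sub>m Suc m) $$ (i,j) \<ge> 0" .
        qed
      qed
      thus ?thesis .
    qed
    show ?case
    proof (intro allI impI)
      fix i assume i: "i < N"
      have "A' ^\<^sub>m Suc k *\<^sub>v w = A' ^\<^sub>m k *\<^sub>v (A' *\<^sub>v w)"
        using assoc_mult_mat_vec[OF Ak A'c w(1)] by simp
      have rw: "r \<cdot>\<^sub>v w \<in> carrier_vec N" using w by simp
      have "(A' ^\<^sub>m k *\<^sub>v (r \<cdot>\<^sub>v w)) $ i \<le> (A' ^\<^sub>m k *\<^sub>v (A' *\<^sub>v w)) $ i"
        by (rule mv_mono[OF Ak Aknn rw]) (use A'c w ineq' i in auto)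
      moreover have "(A' ^\<^sub>m k *\<^sub>v (r \<cdot>\<^sub>v w)) $ i = r * (A' ^\<^sub>m k *\<^sub>v w) $ i"
        using Ak w i by (subst mult_mat_vec[OF Ak w(1)]) auto
      moreover have "r * (A' ^\<^sub>m k *\<^sub>v w) $ i \<ge> r * (r ^ k * w $ i)"
        using Suc i r1 by (simp add: mult_left_mono)
      ultimately show "r ^ Suc k * w $ i \<le> (A' ^\<^sub>m Suc k *\<^sub>v w) $ i"
        using \<open>A' ^\<^sub>m Suc k *\<^sub>v w = A' ^\<^sub>m k *\<^sub>v (A' *\<^sub>v w)\<close> by (simp add: mult.assoc)
    qed
  qed
  define K where "K = c * (\<Sum>j<N. w $ j)"
  have upper: "r ^ k * w $ i0 \<le> K" for k
  proof -
    have Ak: "A' ^\<^sub>m k \<in> carrier_mat N N" using A'c by simp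
    have "(A' ^\<^sub>m k *\<^sub>v w) $ i0 = (\<Sum>j<N. (A' ^\<^sub>m k) $$ (i0,j) * w $ j)"
      by (rule mv_entry[OF Ak w(1) i0(1)])
    also have "\<dots> \<le> (\<Sum>j<N. c * w $ j)"
    proof (rule sum_mono)
      fix j assume "j \<in> {..<N}"
      hence j: "j < N" by auto
      have "(A' ^\<^sub>m k) $$ (i0,j) * w $ j \<le> \<bar>(A' ^\<^sub>m k) $$ (i0,j)\<bar> * w $ j"
        using w j by (intro mult_right_mono) auto
      also have "\<dots> \<le> c * w $ j" using bnd[OF i0(1) j, of k] w j by (intro mult_right_mono) auto
      finally show "(A' ^\<^sub>m k) $$ (i0,j) * w $ j \<le> c * w $ j" .
    qed
    finally have "(A' ^\<^sub>m k *\<^sub>v w) $ i0 \<le> K" unfolding K_def by (simp add: sum_distrib_left)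
    moreover have "r ^ k * w $ i0 \<le> (A' ^\<^sub>m k *\<^sub>v w) $ i0" using pow[of k] i0 by auto
    ultimately show ?thesis by linarith
  qed
  from real_arch_pow[OF r1, of "K / w $ i0"] obtain k where "K / w $ i0 < r ^ k" by auto
  hence "K < r ^ k * w $ i0" using wi0 by (simp add: divide_less_eq)
  with upper[of k] show False by simp
qed




lemma maxmod:
  assumes A: "A \<in> carrier_mat N N" "nonneg_mat A" and N: "N > 0"
  shows "\<exists>w. w \<in> carrier_vec N \<and> (\<forall>i<N. w $ i \<ge> 0) \<and> w \<noteq> 0\<^sub>v N \<and>
             (\<forall>i<N. (A *\<^sub>v w) $ i \<ge> rho A * w $ i)"
proof -
  define Ac where "Ac = map_mat complex_of_real A"
  have Ac: "Ac \<in> carrier_mat N N" unfolding Ac_def using A by auto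
  from spectral_radius_mem_max(1)[OF Ac N] obtain nu where
    nu: "nu \<in> spectrum Ac" "rho A = cmod nu" unfolding rho_def Ac_def by auto
  from nu(1) obtain z where "eigenvector Ac z nu" unfolding spectrum_def eigenvalue_def by auto
  with Ac have z: "z \<in> carrier_vec N" "z \<noteq> 0\<^sub>v N" "Ac *\<^sub>v z = nu \<cdot>\<^sub>v z"
    unfolding eigenvector_def by auto
  define w where "w = vec N (\<lambda>i. cmod (z $ i))"
  have wc: "w \<in> carrier_vec N" unfolding w_def by auto
  from z obtain i0 where i0: "i0 < N" "z $ i0 \<noteq> 0" by (metis eq_vecI carrier_vecD index_zero_vec)
  have "w \<noteq> 0\<^sub>v N"
  proof
    assume "w = 0\<^sub>v N"
    hence "w $ i0 = 0" using i0 by simp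
    thus False using i0 unfolding w_def by simp
  qed
  moreover have "\<forall>i<N. (A *\<^sub>v w) $ i \<ge> rho A * w $ i"
  proof (intro allI impI)
    fix i assume i: "i < N"
    have "rho A * w $ i = cmod ((Ac *\<^sub>v z) $ i)" using z i nu unfolding w_def by (simp add: norm_mult)
    also have "(Ac *\<^sub>v z) $ i = (\<Sum>j<N. Ac $$ (i,j) * z $ j)" by (rule mv_entry[OF Ac z(1) i])
    also have "cmod \<dots> \<le> (\<Sum>j<N. cmod (Ac $$ (i,j) * z $ j))" by (rule norm_sum)
    also have "\<dots> = (\<Sum>j<N. A $$ (i,j) * w $ j)"
      using A i unfolding Ac_def w_def nonneg_mat_def by (intro sum.cong) (auto simp: norm_mult)
    also have "\<dots> = (A *\<^sub>v w) $ i" using mv_entry[OF A(1) wc i] by simp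
    finally show "(A *\<^sub>v w) $ i \<ge> rho A * w $ i" .
  qed
  moreover have "\<forall>i<N. w $ i \<ge> 0" unfolding w_def by auto
  ultimately show ?thesis using wc by blast
qed

definition shiftm :: "real \<Rightarrow> real mat \<Rightarrow> real mat" where
  "shiftm t A = mat (dim_row A) (dim_row A) (\<lambda>(i,j). (if i = j then t else 0) - A $$ (i,j))"

lemma shiftm_carrier: "A \<in> carrier_mat N N \<Longrightarrow> shiftm t A \<in> carrier_mat N N"
  unfolding shiftm_def by auto

lemma shiftm_mult:
  assumes A: "A \<in> carrier_mat N N" and x: "x \<in> carrier_vec N" and i: "i < N"
  shows "(shiftm t A *\<^sub>v x) $ i = t * x $ i - (A *\<^sub>v x) $ i"
proof -
  have S: "shiftm t A \<in> carrier_mat N N" using shiftm_carrier[OF A] .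
  have "(shiftm t A *\<^sub>v x) $ i = (\<Sum>j<N. ((if i = j then t else 0) - A $$ (i,j)) * x $ j)"
    using mv_entry[OF S x i] A i by (auto simp: shiftm_def intro!: sum.cong)
  also have "\<dots> = (\<Sum>j<N. (if i = j then t else 0) * x $ j) - (\<Sum>j<N. A $$ (i,j) * x $ j)"
    by (simp add: left_diff_distrib sum_subtractf)
  also have "(\<Sum>j<N. (if i = j then t else 0) * x $ j) = (\<Sum>j<N. if i = j then t * x $ j else 0)"
    by (rule sum.cong) auto
  also have "\<dots> = t * x $ i" using i by simp
  also have "(\<Sum>j<N. A $$ (i,j) * x $ j) = (A *\<^sub>v x) $ i" using mv_entry[OF A x i] by simp
  finally show ?thesis .
qed

lemma resolvent_nonneg:
  assumes A: "A \<in> carrier_mat N N" "nonneg_mat A" and t: "t > rho A"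
    and x: "x \<in> carrier_vec N" and ge: "\<forall>i<N. t * x $ i - (A *\<^sub>v x) $ i \<ge> 0"
  shows "\<forall>i<N. x $ i \<ge> 0"
proof (rule ccontr)
  assume "\<not> ?thesis"
  then obtain i0 where i0: "i0 < N" "x $ i0 < 0" by force
  define w where "w = vec N (\<lambda>i. max (- x $ i) 0)"
  have wc: "w \<in> carrier_vec N" unfolding w_def by auto
  have wn: "\<forall>i<N. w $ i \<ge> 0" unfolding w_def by auto
  have "w \<noteq> 0\<^sub>v N"
  proof
    assume "w = 0\<^sub>v N" hence "w $ i0 = 0" using i0 by simp
    thus False using i0 unfolding w_def by simp
  qed
  moreover have "\<forall>i<N. (A *\<^sub>v w) $ i \<ge> t * w $ i"
  proof (intro allI impI)
    fix i assume i: "i < N"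
    show "(A *\<^sub>v w) $ i \<ge> t * w $ i"
    proof (cases "x $ i < 0")
      case True
      have mx: "- x \<in> carrier_vec N" using x by simp
      have "t * w $ i = - t * x $ i" using True i unfolding w_def by simp
      also have "\<dots> \<le> - (A *\<^sub>v x) $ i" using ge i by auto
      also have "\<dots> = (A *\<^sub>v (- x)) $ i"
        using mv_entry[OF A(1) x i] mv_entry[OF A(1) mx i] x i by (simp add: sum_negf)
      also have "\<dots> \<le> (A *\<^sub>v w) $ i"
        by (rule mv_mono[OF A mx wc _ i]) (use x in \<open>auto simp: w_def\<close>)
      finally show ?thesis .
    next
      case False
      hence "w $ i = 0" using i unfolding w_def by simp
      thus ?thesis using mv_nonneg[OF A wc wn i] by simp
    qed
  qed
  ultimately show False using sub_inv[OF A wc wn _ t] by blast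
qed




lemma PF_weak:
  assumes A: "A \<in> carrier_mat N N" "nonneg_mat A" and N: "N > 0"
  shows "\<exists>y. y \<in> carrier_vec N \<and> y \<noteq> 0\<^sub>v N \<and> (\<forall>i<N. y $ i \<ge> 0) \<and> A *\<^sub>v y = rho A \<cdot>\<^sub>v y"
proof -
  define r where "r = rho A"
  have r0: "r \<ge> 0" unfolding r_def using rho_nonneg[OF A(1) N] .
  define Mp where "Mp = char_poly_matrix A"
  have Mp: "Mp \<in> carrier_mat N N" using A by (simp add: Mp_def)
  have evM: "\<And>i j. i < N \<Longrightarrow> j < N \<Longrightarrow> poly (Mp $$ (i,j)) t = shiftm t A $$ (i,j)" for t
    using A unfolding Mp_def char_poly_matrix_def shiftm_def by auto
  define cp where "cp = char_poly A"
  have cpMp: "det Mp = cp" unfolding cp_def char_poly_def Mp_def ..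
  have cpdet: "poly cp t = det (shiftm t A)" for t
    unfolding cpMp[symmetric] by (rule poly_det_cong[OF shiftm_carrier[OF A(1)] Mp evM])
  define Adj where "Adj = adj_mat Mp"
  have Adj: "Adj \<in> carrier_mat N N" unfolding Adj_def using adj_mat(1)[OF Mp] .
  have evAdj: "poly (Adj $$ (i,j)) t = adj_mat (shiftm t A) $$ (i,j)" if ij: "i < N" "j < N" for i j t
  proof -
    have S: "shiftm t A \<in> carrier_mat N N" by (rule shiftm_carrier[OF A(1)])
    have "poly (det (mat_delete Mp j i)) t = det (mat_delete (shiftm t A) j i)"
    proof (rule poly_det_cong[of _ "N - 1"])
      show "mat_delete (shiftm t A) j i \<in> carrier_mat (N - 1) (N - 1)" using S by (simp add: mat_delete_def)
      show "mat_delete Mp j i \<in> carrier_mat (N - 1) (N - 1)" using Mp by (simp add: mat_delete_def)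
      fix i' j' assume "i' < N - 1" "j' < N - 1"
      then show "poly (mat_delete Mp j i $$ (i', j')) t = mat_delete (shiftm t A) j i $$ (i', j')"
        using Mp S evM by (auto simp: mat_delete_def)
    qed
    then show ?thesis using Mp S ij unfolding Adj_def adj_mat_def cofactor_def
      by (simp add: poly_mult)
  qed
  define P where "P j = cp * (\<Sum>l<N. Adj $$ (j,l))" for j
  have evP: "poly (P j) t = det (shiftm t A) * (\<Sum>l<N. adj_mat (shiftm t A) $$ (j,l))" if "j < N" for j t
    unfolding P_def using evAdj that cpdet by (simp add: poly_sum)
  have polyid: "(\<Sum>j<N. Mp $$ (i,j) * P j) = cp^2" if i: "i < N" for i
  proof -
    from adj_mat(2)[OF Mp] have MA: "Mp * Adj = cp \<cdot>\<^sub>m 1\<^sub>m N" unfolding Adj_def cpMp .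
    have ent: "(\<Sum>j<N. Mp $$ (i,j) * Adj $$ (j,l)) = (if i = l then cp else 0)" if l: "l < N" for l
    proof -
      have "(Mp * Adj) $$ (i,l) = (\<Sum>j<N. Mp $$ (i,j) * Adj $$ (j,l))"
        using Mp Adj i l by (auto simp: scalar_prod_def atLeast0LessThan intro!: sum.cong)
      moreover have "(Mp * Adj) $$ (i,l) = (if i = l then cp else 0)" using MA i l by auto
      ultimately show ?thesis by simp
    qed
    have "(\<Sum>j<N. Mp $$ (i,j) * P j) = (\<Sum>j<N. \<Sum>l<N. cp * (Mp $$ (i,j) * Adj $$ (j,l)))"
      unfolding P_def by (simp add: sum_distrib_left ac_simps)
    also have "\<dots> = (\<Sum>l<N. \<Sum>j<N. cp * (Mp $$ (i,j) * Adj $$ (j,l)))" by (rule sum.swap)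
    also have "\<dots> = cp * (\<Sum>l<N. \<Sum>j<N. Mp $$ (i,j) * Adj $$ (j,l))" by (simp add: sum_distrib_left)
    also have "\<dots> = cp * (\<Sum>l<N. if i = l then cp else 0)" using ent by simp
    also have "\<dots> = cp^2" using i by (simp add: power2_eq_square)
    finally show ?thesis .
  qed
  have detnz: "det (shiftm t A) \<noteq> 0" if t: "t > r" for t
  proof
    assume "det (shiftm t A) = 0"
    hence "poly (char_poly A) t = 0" using cpdet unfolding cp_def by simp
    hence "eigenvalue A t" using eigenvalue_root_char_poly[OF A(1)] by simp
    then obtain v where "eigenvector A v t" unfolding eigenvalue_def by auto
    from real_ev_le_rho[OF A(1) N this] t show False unfolding r_def by auto
  qed
  have Pnn: "poly (P j) t \<ge> 0" if t: "t > r" and j: "j < N" for t j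
  proof -
    define D where "D = det (shiftm t A)"
    define Ad where "Ad = adj_mat (shiftm t A)"
    have S: "shiftm t A \<in> carrier_mat N N" by (rule shiftm_carrier[OF A(1)])
    have Ad: "Ad \<in> carrier_mat N N" using adj_mat(1)[OF S] unfolding Ad_def .
    have SA: "shiftm t A * Ad = D \<cdot>\<^sub>m 1\<^sub>m N" using adj_mat(2)[OF S] unfolding Ad_def D_def .
    have D0: "D \<noteq> 0" using detnz[OF t] unfolding D_def .
    define x where "x = vec N (\<lambda>j. (\<Sum>l<N. Ad $$ (j,l)) / D)"
    have xc: "x \<in> carrier_vec N" unfolding x_def by simp
    have one: "(shiftm t A *\<^sub>v x) $ i = 1" if i: "i < N" for i
    proof -
      have sl: "(\<Sum>l<N. (shiftm t A * Ad) $$ (i,l)) = (\<Sum>l<N. if i = l then D else 0)"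
        using SA i by (intro sum.cong) auto
      have "(shiftm t A *\<^sub>v x) $ i = (\<Sum>j<N. shiftm t A $$ (i,j) * ((\<Sum>l<N. Ad $$ (j,l)) / D))"
        using mv_entry[OF S xc i] unfolding x_def by simp
      also have "\<dots> = (\<Sum>j<N. \<Sum>l<N. shiftm t A $$ (i,j) * Ad $$ (j,l)) / D"
        by (simp add: sum_divide_distrib sum_distrib_left)
      also have "\<dots> = (\<Sum>l<N. \<Sum>j<N. shiftm t A $$ (i,j) * Ad $$ (j,l)) / D"
        by (subst sum.swap) simp
      also have "\<dots> = (\<Sum>l<N. (shiftm t A * Ad) $$ (i,l)) / D"
        using S Ad i by (auto simp: scalar_prod_def atLeast0LessThan intro!: sum.cong arg_cong[where f="\<lambda>z. z / D"])
      also have "\<dots> = (\<Sum>l<N. if i = l then D else 0) / D" by (simp only: sl)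
      also have "\<dots> = 1" using i D0 by simp
      finally show ?thesis .
    qed
    have "\<forall>i<N. t * x $ i - (A *\<^sub>v x) $ i \<ge> 0" using shiftm_mult[OF A(1) xc] one by simp
    from resolvent_nonneg[OF A _ xc this] t j have xj: "x $ j \<ge> 0" unfolding r_def by auto
    have "poly (P j) t = D^2 * x $ j" using evP[OF j] D0 j unfolding x_def D_def Ad_def
      by (simp add: power2_eq_square)
    then show ?thesis using xj by simp
  qed
  have "\<exists>j<N. P j \<noteq> 0"
  proof (rule ccontr)
    assume "\<not> ?thesis" hence P0: "\<forall>j<N. P j = 0" by auto
    from polyid[OF N] P0 have "cp^2 = 0" by simp
    hence "cp = 0" by simp
    hence "det (shiftm (r+1) A) = 0" using cpdet[of "r+1"] by simp
    with detnz[of "r+1"] show False by simp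
  qed
  define K where "K = (\<lambda>j. order r (P j)) ` {j. j < N \<and> P j \<noteq> 0}"
  have Kfin: "finite K" unfolding K_def by auto
  have Kne: "K \<noteq> {}" unfolding K_def using \<open>\<exists>j<N. P j \<noteq> 0\<close> by auto
  define k0 where "k0 = Min K"
  from Min_in[OF Kfin Kne] obtain j0 where j0: "j0 < N" "P j0 \<noteq> 0" "order r (P j0) = k0"
    unfolding k0_def K_def by auto
  have k0le: "k0 \<le> order r (P j)" if "j < N" "P j \<noteq> 0" for j
    unfolding k0_def using Min_le[OF Kfin] that unfolding K_def by auto
  define X where "X = [:-r,1:] ^ k0"
  have X0: "X \<noteq> 0" unfolding X_def by simp
  have Xdvd: "X dvd P j" if j: "j < N" for j
  proof (cases "P j = 0")
    case False
    have "X dvd [:-r,1:] ^ order r (P j)" unfolding X_def by (rule le_imp_power_dvd[OF k0le[OF j False]])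
    then show ?thesis using order_1 dvd_trans by blast
  qed simp
  define Q where "Q j = P j div X" for j
  have PQ: "P j = X * Q j" if "j < N" for j
    unfolding Q_def using dvd_mult_div_cancel[OF Xdvd[OF that]] by simp
  have Qj0: "poly (Q j0) r \<noteq> 0"
  proof
    assume "poly (Q j0) r = 0"
    hence "[:-r,1:] dvd Q j0" by (simp add: poly_eq_0_iff_dvd)
    then obtain R where "Q j0 = [:-r,1:] * R" by (auto elim: dvdE)
    hence "P j0 = [:-r,1:] ^ Suc k0 * R" using PQ[OF j0(1)] unfolding X_def by (metis power_Suc2 mult.assoc)
    hence "[:-r,1:] ^ Suc (order r (P j0)) dvd P j0" using j0 by simp
    with order_2[OF j0(2)] show False by simp
  qed
  have Qnn: "poly (Q j) t \<ge> 0" if t: "t > r" and j: "j < N" for t j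
  proof -
    have "poly (P j) t = (t - r) ^ k0 * poly (Q j) t" using PQ[OF j] unfolding X_def
      by (simp add: poly_power)
    moreover have "(t - r) ^ k0 > 0" using t by simp
    ultimately show ?thesis using Pnn[OF t j] by (simp add: zero_le_mult_iff)
  qed
  have Qr: "poly (Q j) r \<ge> 0" if j: "j < N" for j
  proof -
    have "(\<lambda>k. r + inverse (real (Suc k))) \<longlonglongrightarrow> r + 0"
      by (intro tendsto_add tendsto_const LIMSEQ_inverse_real_of_nat)
    hence "(\<lambda>k. poly (Q j) (r + inverse (real (Suc k)))) \<longlonglongrightarrow> poly (Q j) r"
      using isCont_tendsto_compose[OF poly_isCont] by auto
    moreover have "\<forall>k. 0 \<le> poly (Q j) (r + inverse (real (Suc k)))"
      using Qnn j by auto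
    ultimately show ?thesis by (intro LIMSEQ_le_const) auto
  qed
  define V where "V i = (\<Sum>j<N. Mp $$ (i,j) * Q j)" for i
  have XV: "X * V i = cp^2" if i: "i < N" for i
  proof -
    have "X * V i = (\<Sum>j<N. Mp $$ (i,j) * (X * Q j))" unfolding V_def
      by (simp add: sum_distrib_left ac_simps)
    also have "\<dots> = (\<Sum>j<N. Mp $$ (i,j) * P j)" using PQ by simp
    finally show ?thesis using polyid[OF i] by simp
  qed
  have Veq: "V i = V 0" if i: "i < N" for i
    using XV[OF i] XV[OF N] X0 by (metis mult_left_cancel)
  define y where "y = vec N (\<lambda>j. poly (Q j) r)"
  have yc: "y \<in> carrier_vec N" unfolding y_def by simp
  have ynn: "\<forall>i<N. y $ i \<ge> 0" unfolding y_def using Qr by simp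
  have ynz: "y \<noteq> 0\<^sub>v N"
  proof
    assume "y = 0\<^sub>v N" hence "y $ j0 = 0" using j0 by simp
    thus False using Qj0 j0 unfolding y_def by simp
  qed
  define sg where "sg = poly (V 0) r"
  have yeq: "r * y $ i - (A *\<^sub>v y) $ i = sg" if i: "i < N" for i
  proof -
    have S: "shiftm r A \<in> carrier_mat N N" by (rule shiftm_carrier[OF A(1)])
    have "(shiftm r A *\<^sub>v y) $ i = (\<Sum>j<N. shiftm r A $$ (i,j) * y $ j)" by (rule mv_entry[OF S yc i])
    also have "\<dots> = (\<Sum>j<N. poly (Mp $$ (i,j)) r * poly (Q j) r)"
      using evM i unfolding y_def by (intro sum.cong) auto
    also have "\<dots> = poly (V i) r" unfolding V_def by (simp add: poly_sum poly_mult)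
    also have "\<dots> = sg" using Veq[OF i] unfolding sg_def by simp
    finally show ?thesis using shiftm_mult[OF A(1) yc i] by simp
  qed
  have Aynn: "\<forall>i<N. (A *\<^sub>v y) $ i \<ge> 0" using mv_nonneg[OF A yc ynn] by auto
  consider "sg = 0" | "sg > 0" | "sg < 0" by linarith
  then show ?thesis
  proof cases
    case 1
    have "A *\<^sub>v y = rho A \<cdot>\<^sub>v y"
      by (rule eq_vecI) (use yeq 1 A yc in \<open>auto simp: r_def\<close>)
    then show ?thesis using yc ynz ynn by blast
  next
    case 2
    from maxmod[OF A N] obtain w where w: "w \<in> carrier_vec N" "\<forall>i<N. w $ i \<ge> 0" "w \<noteq> 0\<^sub>v N"
      "\<forall>i<N. (A *\<^sub>v w) $ i \<ge> r * w $ i" unfolding r_def by auto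
    have ypos: "y $ i > 0" if i: "i < N" for i
    proof -
      have "r * y $ i > 0" using yeq[OF i] Aynn i 2 by fastforce
      thus ?thesis using ynn i r0 by (simp add: zero_less_mult_iff)
    qed
    define c where "c = Max ((\<lambda>i. w $ i / y $ i) ` {..<N})"
    have cfin: "finite ((\<lambda>i. w $ i / y $ i) ` {..<N})" by simp
    have cne: "(\<lambda>i. w $ i / y $ i) ` {..<N} \<noteq> {}" using N by auto
    from Min_in[OF cfin cne] Max_in[OF cfin cne] obtain i1 where i1: "i1 < N" "c = w $ i1 / y $ i1"
      unfolding c_def by auto
    have wle: "w $ i \<le> c * y $ i" if i: "i < N" for i
    proof -
      have "w $ i / y $ i \<le> c" unfolding c_def using i by (intro Max_ge[OF cfin]) auto
      thus ?thesis using ypos[OF i] by (simp add: divide_le_eq)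
    qed
    from w obtain i2 where i2: "i2 < N" "w $ i2 \<noteq> 0" by (metis eq_vecI carrier_vecD index_zero_vec)
    have "0 < w $ i2 / y $ i2" using i2 w(2) ypos[OF i2(1)] by (simp add: order_le_neq_trans)
    also have "\<dots> \<le> c" unfolding c_def using i2 by (intro Max_ge[OF cfin]) auto
    finally have c0: "c > 0" .
    have cy: "c \<cdot>\<^sub>v y \<in> carrier_vec N" using yc by simp
    have "r * w $ i1 \<le> (A *\<^sub>v w) $ i1" using w i1 by auto
    also have "\<dots> \<le> (A *\<^sub>v (c \<cdot>\<^sub>v y)) $ i1"
      by (rule mv_mono[OF A w(1) cy _ i1(1)]) (use wle yc in auto)
    also have "\<dots> = c * (A *\<^sub>v y) $ i1" using mult_mat_vec[OF A(1) yc] i1 A by simp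
    also have "\<dots> = c * (r * y $ i1 - sg)" using yeq[OF i1(1)] by simp
    also have "\<dots> = r * (c * y $ i1) - c * sg" by (simp add: algebra_simps)
    also have "c * y $ i1 = w $ i1" using i1 ypos[OF i1(1)] by simp
    finally have "c * sg \<le> 0" by simp
    with c0 2 show ?thesis by (simp add: mult_le_0_iff)
  next
    case 3
    define m where "m = Max ((\<lambda>i. y $ i) ` {..<N})"
    have mfin: "finite ((\<lambda>i. y $ i) ` {..<N})" by simp
    have yle: "y $ i \<le> m" if "i < N" for i unfolding m_def using that by (intro Max_ge[OF mfin]) auto
    have "0 < y $ j0" using Qj0 Qr[OF j0(1)] j0 unfolding y_def by auto
    with yle[OF j0(1)] have m0: "m > 0" by simp
    define e where "e = - sg / m"
    have e0: "e > 0" unfolding e_def using m0 3 by (simp add: divide_neg_pos)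
    have "\<forall>i<N. (A *\<^sub>v y) $ i \<ge> (r + e) * y $ i"
    proof (intro allI impI)
      fix i assume i: "i < N"
      have "e * y $ i \<le> e * m" using yle[OF i] e0 by (simp add: mult_left_mono)
      also have "\<dots> = - sg" unfolding e_def using m0 by simp
      finally show "(A *\<^sub>v y) $ i \<ge> (r + e) * y $ i" using yeq[OF i] by (simp add: algebra_simps)
    qed
    from sub_inv[OF A yc ynn ynz _ this] e0 show ?thesis unfolding r_def by simp
  qed
qed




lemma sum_blocks:
  fixes f :: "nat \<Rightarrow> 'a::comm_monoid_add"
  shows "(\<Sum>h<d*n. f h) = (\<Sum>c<d. \<Sum>l<n. f (c*n + l))"
proof -
  have "(\<Sum>h<d*n. f h) = (\<Sum>c<d. sum f {c*n..<c*n+n})" by (rule sum.nat_group[symmetric])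
  also have "\<dots> = (\<Sum>c<d. \<Sum>l<n. f (c*n + l))"
  proof (rule sum.cong[OF refl])
    fix c
    have "sum f {c*n..<c*n+n} = sum f {0 + c*n..<n + c*n}" by (simp add: add.commute)
    also have "\<dots> = (\<Sum>l=0..<n. f (l + c*n))" by (rule sum.shift_bounds_nat_ivl)
    finally show "sum f {c*n..<c*n+n} = (\<Sum>l<n. f (c*n + l))" by (simp add: atLeast0LessThan add.commute)
  qed
  finally show ?thesis .
qed

lemma chain_mono:
  fixes f :: "nat \<Rightarrow> real"
  assumes "\<And>b. b + 1 < d \<Longrightarrow> f b \<le> f (b+1)"
  shows "b \<le> b' \<Longrightarrow> b' < d \<Longrightarrow> f b \<le> f b'"
proof (induction b')
  case 0 then show ?case by simp
next
  case (Suc b')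
  show ?case
  proof (cases "b = Suc b'")
    case False
    with Suc have "f b \<le> f b'" by auto
    also have "\<dots> \<le> f (Suc b')" using assms[of b'] Suc by simp
    finally show ?thesis .
  qed simp
qed




theorem proposition3p1:
  fixes n d :: nat and BJ :: "real mat" and Bs :: "nat \<Rightarrow> real mat"
  assumes "BJ \<in> carrier_mat n n"
    and "irreducible_mat n BJ"
    and "nonneg_mat BJ"
    and "is_splitting n d BJ Bs"
    and "rho (iter_mat n d Bs) > 0"
  shows "\<exists>x. eigenvector (iter_mat n d Bs) x (rho (iter_mat n d Bs))
           \<and> (\<forall>i<d*n. x $ i > 0)
           \<and> (let lam = rho (iter_mat n d Bs); al = block_vec n x in
               (lam \<le> 1 \<longrightarrow>
                  (\<forall>i<n. 0 < lam * (al 1 $ i)) \<and> vle n (lam \<cdot>\<^sub>v al 1) (al d) \<and>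
                  (\<forall>p\<in>{1..<d}. vle n (al (p+1)) (al p))) \<and>
               (lam \<ge> 1 \<longrightarrow>
                  (\<forall>i<n. 0 < al 1 $ i) \<and>
                  (\<forall>p\<in>{1..<d}. vle n (al p) (al (p+1))) \<and> vle n (al d) (lam \<cdot>\<^sub>v al 1)))"
proof -
  define N where "N = d * n"
  from assms(4) have d1: "d \<ge> 1"
    and Bc: "\<And>p. p \<in> {1..d} \<Longrightarrow> Bs p \<in> carrier_mat n n"
    and Bnz: "\<And>p. p \<in> {1..d} \<Longrightarrow> Bs p \<noteq> 0\<^sub>m n n"
    and BJdef: "BJ = mat n n (\<lambda>(i,j). \<Sum>p=1..d. Bs p $$ (i,j))"
    and hadz: "\<And>p q. p \<in> {1..d} \<Longrightarrow> q \<in> {1..d} \<Longrightarrow> p \<noteq> q \<Longrightarrow> hadamard_mat (Bs p) (Bs q) = 0\<^sub>m n n"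
    unfolding is_splitting_def by auto
  have n0: "n > 0"
  proof (rule ccontr)
    assume "\<not> n > 0" hence n: "n = 0" by simp
    have "Bs 1 = 0\<^sub>m n n" using Bc[of 1] d1 n by (intro eq_matI) auto
    with Bnz[of 1] d1 show False by auto
  qed
  have BJe: "BJ $$ (i,j) = (\<Sum>p=1..d. Bs p $$ (i,j))" if "i < n" "j < n" for i j
    using that by (subst BJdef) simp
  have had: "Bs p $$ (i,j) * Bs q $$ (i,j) = 0"
    if "p \<in> {1..d}" "q \<in> {1..d}" "p \<noteq> q" "i < n" "j < n" for p q i j
  proof -
    have "hadamard_mat (Bs p) (Bs q) $$ (i,j) = 0" using hadz[OF that(1-3)] that by simp
    thus ?thesis using Bc[OF that(1)] that unfolding hadamard_mat_def by simp
  qed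
  have Bnn: "Bs p $$ (i,j) \<ge> 0" if p: "p \<in> {1..d}" and ij: "i < n" "j < n" for p i j
  proof (cases "Bs p $$ (i,j) = 0")
    case False
    have "(\<Sum>q=1..d. Bs q $$ (i,j)) = (\<Sum>q=1..d. if q = p then Bs p $$ (i,j) else 0)"
    proof (rule sum.cong[OF refl])
      fix q assume q: "q \<in> {1..d}"
      show "Bs q $$ (i,j) = (if q = p then Bs p $$ (i,j) else 0)"
        using had[OF p q _ ij] False by auto
    qed
    also have "\<dots> = Bs p $$ (i,j)" using p by simp
    finally have "BJ $$ (i,j) = Bs p $$ (i,j)" using BJe[OF ij] by simp
    moreover have "BJ $$ (i,j) \<ge> 0" using assms(1,3) ij unfolding nonneg_mat_def by auto
    ultimately show ?thesis by simp
  qed simp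
  have divd: "j div n < d" if "j < N" for j
    using that unfolding N_def by (simp add: less_mult_imp_div_less)
  have modn: "j mod n < n" for j using n0 by simp
  define L where "L = block_L n d Bs"
  define U where "U = block_U n d Bs"
  have Lc: "L \<in> carrier_mat N N" unfolding L_def block_L_def N_def by simp
  have Uc: "U \<in> carrier_mat N N" unfolding U_def block_U_def N_def by simp
  have Le: "L $$ (i,j) = (if j div n < i div n then Bs (j div n + 1) $$ (i mod n, j mod n) else 0)"
    if "i < N" "j < N" for i j using that unfolding L_def block_L_def N_def by simp
  have Ue: "U $$ (i,j) = (if i div n \<le> j div n then Bs (j div n + 1) $$ (i mod n, j mod n) else 0)"
    if "i < N" "j < N" for i j using that unfolding U_def block_U_def N_def by simp
  have Lnn: "nonneg_mat L" unfolding nonneg_mat_def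
  proof (intro allI impI)
    fix i j assume "i < dim_row L" "j < dim_col L"
    hence ij: "i < N" "j < N" using Lc by auto
    show "L $$ (i,j) \<ge> 0" using Le[OF ij] Bnn[of "j div n + 1" "i mod n" "j mod n"] divd[OF ij(2)] modn
      by auto
  qed
  have Unn: "nonneg_mat U" unfolding nonneg_mat_def
  proof (intro allI impI)
    fix i j assume "i < dim_row U" "j < dim_col U"
    hence ij: "i < N" "j < N" using Uc by auto
    show "U $$ (i,j) \<ge> 0" using Ue[OF ij] Bnn[of "j div n + 1" "i mod n" "j mod n"] divd[OF ij(2)] modn
      by auto
  qed
  define IL where "IL = 1\<^sub>m N - L"
  have ILc: "IL \<in> carrier_mat N N" unfolding IL_def using Lc by (simp add: minus_carrier_mat)
  have ILe: "IL $$ (i,j) = (if i = j then 1 else 0) - L $$ (i,j)" if "i < N" "j < N" for i j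
    unfolding IL_def using that Lc by simp
  have ILsh: "IL = shiftm 1 L" unfolding shiftm_def using Lc ILc ILe by (intro eq_matI) auto
  have "det IL = prod_list (diag_mat IL)"
  proof (rule det_lower_triangular[OF _ ILc])
    fix i j assume ij: "i < j" "j < N"
    have "\<not> j div n < i div n" using ij by (simp add: div_le_mono not_less)
    thus "IL $$ (i,j) = 0" using ILe[of i j] Le[of i j] ij by auto
  qed
  also have "diag_mat IL = map (\<lambda>i. 1) [0..<N]"
    unfolding diag_mat_def using ILc ILe Le by (auto intro!: map_cong)
  also have "prod_list \<dots> = 1" by (induction N) auto
  finally have detIL: "det IL = 1" .
  obtain X where X: "mat_inverse IL = Some X"
  proof (cases "mat_inverse IL")
    case None
    from mat_inverse(1)[OF ILc None, of "()"] det_non_zero_imp_unit[OF ILc, of "()"] detIL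
    show ?thesis by simp
  qed
  from mat_inverse(2)[OF ILc X] have ILX: "IL * X = 1\<^sub>m N" and Xc: "X \<in> carrier_mat N N" by auto
  define T where "T = iter_mat n d Bs"
  have ILeq: "1\<^sub>m (d*n) - block_L n d Bs = IL" unfolding IL_def N_def L_def ..
  have TXU: "T = X * U" unfolding T_def iter_mat_def U_def ILeq X by simp
  have Xrec: "X $$ (i,j) = (if i = j then 1 else 0) + (\<Sum>k<N. L $$ (i,k) * X $$ (k,j))"
    if ij: "i < N" "j < N" for i j
  proof -
    have cX: "col X j \<in> carrier_vec N" using Xc by (simp add: carrier_vecI)
    have "(IL * X) $$ (i,j) = (IL *\<^sub>v col X j) $ i" using ILc Xc ij by simp
    also have "\<dots> = 1 * (col X j) $ i - (L *\<^sub>v col X j) $ i"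
      unfolding ILsh by (rule shiftm_mult[OF Lc cX ij(1)])
    also have "(L *\<^sub>v col X j) $ i = (\<Sum>k<N. L $$ (i,k) * X $$ (k,j))"
      using mv_entry[OF Lc cX ij(1)] Xc ij by simp
    finally have "(IL * X) $$ (i,j) = X $$ (i,j) - (\<Sum>k<N. L $$ (i,k) * X $$ (k,j))"
      using Xc ij by simp
    moreover have "(IL * X) $$ (i,j) = (if i = j then 1 else 0)" using ILX ij by simp
    ultimately show ?thesis by simp
  qed
  have Xnn_b: "\<forall>i<N. i div n = b \<longrightarrow> (\<forall>j<N. X $$ (i,j) \<ge> 0)" for b
  proof (induction b rule: less_induct)
    case (less b)
    show ?case
    proof (intro allI impI)
      fix i j assume i: "i < N" "i div n = b" and j: "j < N"
      have "(\<Sum>k<N. L $$ (i,k) * X $$ (k,j)) \<ge> 0"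
      proof (rule sum_nonneg)
        fix k assume "k \<in> {..<N}" hence k: "k < N" by simp
        show "L $$ (i,k) * X $$ (k,j) \<ge> 0"
        proof (cases "k div n < i div n")
          case True
          have "X $$ (k,j) \<ge> 0" using less[of "k div n"] True i k j by auto
          moreover have "L $$ (i,k) \<ge> 0" using Lnn Lc i k unfolding nonneg_mat_def by auto
          ultimately show ?thesis by simp
        next
          case False
          then show ?thesis using Le[OF i(1) k] by simp
        qed
      qed
      then show "X $$ (i,j) \<ge> 0" using Xrec[OF i(1) j] by simp
    qed
  qed
  have Xnn: "X $$ (i,j) \<ge> 0" if "i < N" "j < N" for i j using Xnn_b[of "i div n"] that by auto
  have Tc: "T \<in> carrier_mat N N" unfolding TXU using Xc Uc by simp
  have Tnn: "nonneg_mat T" unfolding nonneg_mat_def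
  proof (intro allI impI)
    fix i j assume "i < dim_row T" "j < dim_col T"
    hence ij: "i < N" "j < N" using Tc by auto
    have "T $$ (i,j) = (\<Sum>k<N. X $$ (i,k) * U $$ (k,j))"
      unfolding TXU using Xc Uc ij by (auto simp: scalar_prod_def atLeast0LessThan intro!: sum.cong)
    also have "\<dots> \<ge> 0" using Xnn Unn Uc ij unfolding nonneg_mat_def
      by (intro sum_nonneg mult_nonneg_nonneg) auto
    finally show "T $$ (i,j) \<ge> 0" .
  qed
  have N0: "N > 0" unfolding N_def using d1 n0 by simp
  define r where "r = rho T"
  have r0: "r > 0" using assms(5) unfolding r_def T_def .
  from PF_weak[OF Tc Tnn N0] obtain y where y: "y \<in> carrier_vec N" "y \<noteq> 0\<^sub>v N"
    "\<forall>i<N. y $ i \<ge> 0" "T *\<^sub>v y = r \<cdot>\<^sub>v y" unfolding r_def by auto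
  have ILT: "IL * T = U" unfolding TXU
    using assoc_mult_mat[OF ILc Xc Uc, symmetric] ILX Uc by simp
  have Uy: "U *\<^sub>v y = r \<cdot>\<^sub>v (IL *\<^sub>v y)"
  proof -
    have "U *\<^sub>v y = IL *\<^sub>v (T *\<^sub>v y)" unfolding ILT[symmetric]
      using assoc_mult_mat_vec[OF ILc Tc y(1)] .
    also have "\<dots> = r \<cdot>\<^sub>v (IL *\<^sub>v y)" unfolding y(4) using mult_mat_vec[OF ILc y(1)] .
    finally show ?thesis .
  qed
  have Ueq: "(U *\<^sub>v y) $ g = r * (y $ g - (L *\<^sub>v y) $ g)" if g: "g < N" for g
  proof -
    have "(U *\<^sub>v y) $ g = r * (IL *\<^sub>v y) $ g" unfolding Uy using ILc g by simp
    also have "(IL *\<^sub>v y) $ g = 1 * y $ g - (L *\<^sub>v y) $ g"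
      unfolding ILsh by (rule shiftm_mult[OF Lc y(1) g])
    finally show ?thesis by simp
  qed
  define x where "x c l = y $ (c*n + l)" for c l
  define v where "v c k = (\<Sum>l<n. Bs (c+1) $$ (k,l) * x c l)" for c k
  have idx: "c*n + l < N" if "c < d" "l < n" for c l
  proof -
    have "c*n + l < c*n + n" using that by simp
    also have "\<dots> = Suc c * n" by simp
    also have "\<dots> \<le> d * n" using that by (intro mult_right_mono) auto
    finally show ?thesis unfolding N_def .
  qed
  have dm: "(c*n + l) div n = c" "(c*n + l) mod n = l" if "l < n" for c l
    using that n0 by auto
  have xnn: "x c l \<ge> 0" if "c < d" "l < n" for c l using y(3) idx[OF that] unfolding x_def by simp
  have vnn: "v c k \<ge> 0" if "c < d" "k < n" for c k
    unfolding v_def using Bnn xnn that by (intro sum_nonneg mult_nonneg_nonneg) auto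
  have Uy2: "(U *\<^sub>v y) $ (b*n+k) = (\<Sum>c<d. if b \<le> c then v c k else 0)" if bk: "b < d" "k < n" for b k
  proof -
    have "(U *\<^sub>v y) $ (b*n+k) = (\<Sum>h<N. U $$ (b*n+k, h) * y $ h)" by (rule mv_entry[OF Uc y(1) idx[OF bk]])
    also have "\<dots> = (\<Sum>c<d. \<Sum>l<n. U $$ (b*n+k, c*n+l) * y $ (c*n+l))" unfolding N_def by (rule sum_blocks)
    also have "\<dots> = (\<Sum>c<d. if b \<le> c then v c k else 0)"
    proof (rule sum.cong[OF refl])
      fix c assume "c \<in> {..<d}" hence c: "c < d" by simp
      have "(\<Sum>l<n. U $$ (b*n+k, c*n+l) * y $ (c*n+l)) = (\<Sum>l<n. (if b \<le> c then Bs (c+1) $$ (k,l) else 0) * x c l)"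
        using Ue[OF idx[OF bk] idx[OF c]] idx[OF c] dm bk unfolding x_def by (intro sum.cong) auto
      also have "\<dots> = (if b \<le> c then v c k else 0)" unfolding v_def by auto
      finally show "(\<Sum>l<n. U $$ (b*n+k, c*n+l) * y $ (c*n+l)) = (if b \<le> c then v c k else 0)" .
    qed
    finally show ?thesis .
  qed
  have Ly2: "(L *\<^sub>v y) $ (b*n+k) = (\<Sum>c<d. if c < b then v c k else 0)" if bk: "b < d" "k < n" for b k
  proof -
    have "(L *\<^sub>v y) $ (b*n+k) = (\<Sum>h<N. L $$ (b*n+k, h) * y $ h)" by (rule mv_entry[OF Lc y(1) idx[OF bk]])
    also have "\<dots> = (\<Sum>c<d. \<Sum>l<n. L $$ (b*n+k, c*n+l) * y $ (c*n+l))" unfolding N_def by (rule sum_blocks)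
    also have "\<dots> = (\<Sum>c<d. if c < b then v c k else 0)"
    proof (rule sum.cong[OF refl])
      fix c assume "c \<in> {..<d}" hence c: "c < d" by simp
      have "(\<Sum>l<n. L $$ (b*n+k, c*n+l) * y $ (c*n+l)) = (\<Sum>l<n. (if c < b then Bs (c+1) $$ (k,l) else 0) * x c l)"
        using Le[OF idx[OF bk] idx[OF c]] idx[OF c] dm bk unfolding x_def by (intro sum.cong) auto
      also have "\<dots> = (if c < b then v c k else 0)" unfolding v_def by auto
      finally show "(\<Sum>l<n. L $$ (b*n+k, c*n+l) * y $ (c*n+l)) = (if c < b then v c k else 0)" .
    qed
    finally show ?thesis .
  qed
  have E: "(\<Sum>c<d. (if b \<le> c then 1 else r) * v c k) = r * x b k" if bk: "b < d" "k < n" for b k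
  proof -
    have "(\<Sum>c<d. (if b \<le> c then 1 else r) * v c k)
        = (\<Sum>c<d. if b \<le> c then v c k else 0) + r * (\<Sum>c<d. if c < b then v c k else 0)"
    proof -
      have "(\<Sum>c<d. (if b \<le> c then 1 else r) * v c k)
          = (\<Sum>c<d. (if b \<le> c then v c k else 0) + r * (if c < b then v c k else 0))"
        by (rule sum.cong) auto
      thus ?thesis by (simp add: sum.distrib sum_distrib_left)
    qed
    also have "\<dots> = r * x b k" using Ueq[OF idx[OF bk]] Uy2[OF bk] Ly2[OF bk] unfolding x_def
      by (simp add: algebra_simps)
    finally show ?thesis .
  qed
  have diff: "r * x (b+1) k - r * x b k = (r - 1) * v b k" if bk: "b+1 < d" "k < n" for b k
  proof -
    have "(\<Sum>c<d. (if b+1 \<le> c then 1 else r) * v c k) - (\<Sum>c<d. (if b \<le> c then 1 else r) * v c k)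
        = (\<Sum>c<d. (if b+1 \<le> c then 1 else r) * v c k - (if b \<le> c then 1 else r) * v c k)"
      by (simp add: sum_subtractf)
    also have "\<dots> = (\<Sum>c<d. if c = b then (r - 1) * v c k else 0)"
      by (rule sum.cong) (auto simp: algebra_simps)
    also have "\<dots> = (r - 1) * v b k" using bk by simp
    finally show ?thesis using E[of "b+1" k] E[of b k] bk by simp
  qed
  have last: "r * x (d-1) k = r^2 * x 0 k + (1 - r) * v (d-1) k" if k: "k < n" for k
  proof -
    have "(\<Sum>c<d. (if d-1 \<le> c then 1 else r) * v c k) = (\<Sum>c<d. r * v c k + (if c = d-1 then (1 - r) * v c k else 0))"
      by (rule sum.cong) (auto simp: algebra_simps)
    also have "\<dots> = r * (\<Sum>c<d. v c k) + (1 - r) * v (d-1) k"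
      using d1 by (simp add: sum.distrib sum_distrib_left)
    also have "(\<Sum>c<d. v c k) = r * x 0 k" using E[of 0 k] d1 k by simp
    finally show ?thesis using E[of "d-1" k] d1 k by (simp add: power2_eq_square)
  qed
  have step1: "x (b+1) k \<le> x b k" if "r \<le> 1" "b+1 < d" "k < n" for b k
  proof -
    have "r * (x (b+1) k - x b k) \<le> 0" using diff[of b k] that vnn[of b k]
      by (simp add: right_diff_distrib mult_nonpos_nonneg)
    thus ?thesis using r0 by (simp add: mult_le_0_iff)
  qed
  have step2: "x b k \<le> x (b+1) k" if "r \<ge> 1" "b+1 < d" "k < n" for b k
  proof -
    have "r * (x (b+1) k - x b k) \<ge> 0" using diff[of b k] that vnn[of b k]
      by (simp add: right_diff_distrib)
    thus ?thesis using r0 by (simp add: zero_le_mult_iff)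
  qed
  have chain1: "x b' k \<le> x b k" if "r \<le> 1" "b \<le> b'" "b' < d" "k < n" for b b' k
    using chain_mono[of d "\<lambda>b. - x b k" b b'] step1 that by auto
  have chain2: "x b k \<le> x b' k" if "r \<ge> 1" "b \<le> b'" "b' < d" "k < n" for b b' k
    using chain_mono[of d "\<lambda>b. x b k" b b'] step2 that by auto
  have last1: "r * x 0 k \<le> x (d-1) k" if "r \<le> 1" "k < n" for k
  proof -
    have "r * (r * x 0 k) \<le> r * x (d-1) k"
      using last[OF that(2)] vnn[of "d-1" k] d1 that by (simp add: power2_eq_square)
    thus ?thesis using r0 by simp
  qed
  have last2: "x (d-1) k \<le> r * x 0 k" if "r \<ge> 1" "k < n" for k
  proof -
    have "r * x (d-1) k \<le> r * (r * x 0 k)"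
      using last[OF that(2)] vnn[of "d-1" k] d1 that by (simp add: power2_eq_square mult_nonpos_nonneg)
    thus ?thesis using r0 by simp
  qed
  have zeroiff: "x b k = 0 \<longleftrightarrow> x 0 k = 0" if bk: "b < d" "k < n" for b k
  proof (cases "r \<le> 1")
    case True
    have bd: "b \<le> d - 1" "d - 1 < d" using bk by auto
    have h1: "r * x 0 k \<le> x b k" using last1[OF True bk(2)] chain1[OF True bd bk(2)] by linarith
    have h2: "x b k \<le> x 0 k" using chain1[OF True _ bk] by simp
    note h = h1 h2 xnn[OF bk] xnn[of 0 k]
    show ?thesis
    proof
      assume "x b k = 0" hence "r * x 0 k \<le> 0" using h by simp
      hence "x 0 k \<le> 0" using r0 by (simp add: mult_le_0_iff)
      thus "x 0 k = 0" using h bk by simp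
    next
      assume "x 0 k = 0" thus "x b k = 0" using h by simp
    qed
  next
    case False
    hence F: "r \<ge> 1" by simp
    have bd: "b \<le> d - 1" "d - 1 < d" using bk by auto
    have h1: "x b k \<le> r * x 0 k" using last2[OF F bk(2)] chain2[OF F bd bk(2)] by linarith
    have h2: "x 0 k \<le> x b k" using chain2[OF F _ bk] by simp
    note h = h1 h2 xnn[OF bk] xnn[of 0 k]
    show ?thesis
    proof
      assume "x b k = 0" thus "x 0 k = 0" using h bk by simp
    next
      assume "x 0 k = 0" thus "x b k = 0" using h by simp
    qed
  qed
  have zclose: "Bs (c+1) $$ (k,l) * x c l = 0"
    if bk: "b < d" "k < n" "x b k = 0" and cl: "c < d" "l < n" for b k c l
  proof -
    have terms: "\<And>c. c \<in> {..<d} \<Longrightarrow> 0 \<le> (if b \<le> c then 1 else r) * v c k"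
      using vnn bk r0 by auto
    have "(\<Sum>c<d. (if b \<le> c then 1 else r) * v c k) = 0" using E[OF bk(1,2)] bk by simp
    hence "\<forall>c\<in>{..<d}. (if b \<le> c then 1 else r) * v c k = 0"
      using sum_nonneg_eq_0_iff[of "{..<d}" "\<lambda>c. (if b \<le> c then 1 else r) * v c k"] terms by blast
    hence "(if b \<le> c then 1 else r) * v c k = 0" using cl by blast
    hence vc: "v c k = 0" using r0 by (auto split: if_splits)
    have terms2: "\<And>l. l \<in> {..<n} \<Longrightarrow> 0 \<le> Bs (c+1) $$ (k,l) * x c l"
      using Bnn xnn cl bk by (auto intro!: mult_nonneg_nonneg)
    from vc have "(\<Sum>l<n. Bs (c+1) $$ (k,l) * x c l) = 0" unfolding v_def .
    hence "\<forall>l\<in>{..<n}. Bs (c+1) $$ (k,l) * x c l = 0"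
      using sum_nonneg_eq_0_iff[of "{..<n}" "\<lambda>l. Bs (c+1) $$ (k,l) * x c l"] terms2 by blast
    thus ?thesis using cl by blast
  qed
  define S where "S = {k. k < n \<and> x 0 k = 0}"
  have closed: "BJ $$ (k,l) = 0" if "k \<in> S" "l \<in> {..<n} - S" for k l
  proof -
    have k: "k < n" "x 0 k = 0" and l: "l < n" "x 0 l \<noteq> 0" using that unfolding S_def by auto
    have "(\<Sum>p=1..d. Bs p $$ (k,l)) = 0"
    proof (rule sum.neutral, intro ballI)
      fix p assume p: "p \<in> {1..d}"
      hence pd: "p - 1 < d" "p - 1 + 1 = p" by auto
      have "Bs (p-1+1) $$ (k,l) * x (p-1) l = 0"
        by (rule zclose[of 0 k]) (use d1 k l pd in auto)
      moreover have "x (p-1) l \<noteq> 0" using zeroiff[OF pd(1) l(1)] l by simp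
      ultimately show "Bs p $$ (k,l) = 0" using pd by simp
    qed
    thus ?thesis using BJe[OF k(1) l(1)] by simp
  qed
  have yg: "y $ g = x (g div n) (g mod n)" for g
    unfolding x_def by simp
  have Sempty: "S = {}"
  proof (rule ccontr)
    assume Sne: "S \<noteq> {}"
    have Ssub: "S \<subseteq> {..<n}" unfolding S_def by auto
    show False
    proof (cases "S = {..<n}")
      case True
      have "y = 0\<^sub>v N"
      proof (rule eq_vecI)
        fix g assume "g < dim_vec (0\<^sub>v N :: real vec)"
        hence g: "g < N" by simp
        have "g mod n \<in> S" using True modn by auto
        hence "x 0 (g mod n) = 0" unfolding S_def by auto
        hence "x (g div n) (g mod n) = 0" using zeroiff[OF divd[OF g] modn] by simp
        thus "y $ g = 0\<^sub>v N $ g" using g yg by simp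
      qed (use y in auto)
      with y(2) show False by simp
    next
      case False
      have n2: "n \<ge> 2"
      proof (rule ccontr)
        assume "\<not> n \<ge> 2" hence "n = 1" using n0 by simp
        hence "S = {..<n}" using Sne Ssub by (auto simp: lessThan_Suc)
        with False show False by simp
      qed
      have "S \<subset> {..<n}" using Ssub False by auto
      hence "reducible_mat n BJ" unfolding reducible_mat_def
        using n2 Sne closed by (intro disjI2 conjI exI[of _ S]) auto
      with assms(2) show False unfolding irreducible_mat_def by simp
    qed
  qed
  have xpos: "x b k > 0" if "b < d" "k < n" for b k
  proof -
    have "x 0 k \<noteq> 0" using Sempty that unfolding S_def by auto
    hence "x b k \<noteq> 0" using zeroiff[OF that] by simp
    thus ?thesis using xnn[OF that] by simp
  qed
  have ypos: "\<forall>g<d*n. y $ g > 0" unfolding N_def[symmetric]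
    using xpos divd modn yg by auto
  have eig: "eigenvector T y r" unfolding eigenvector_def using Tc y by auto
  define al where "al = block_vec n y"
  have al: "al p $ i = x (p-1) i" if "i < n" for p i
    unfolding al_def block_vec_def x_def using that by simp
  have dimal: "dim_vec (al p) = n" for p unfolding al_def block_vec_def by simp
  have A1: "(\<forall>i<n. 0 < r * (al 1 $ i)) \<and> vle n (r \<cdot>\<^sub>v al 1) (al d) \<and>
                  (\<forall>p\<in>{1..<d}. vle n (al (p+1)) (al p))" if r1: "r \<le> 1"
  proof (intro conjI ballI allI impI)
    fix i assume i: "i < n"
    show "0 < r * (al 1 $ i)" using al[OF i] xpos[of 0 i] d1 i r0 by simp
  next
    show "vle n (r \<cdot>\<^sub>v al 1) (al d)" unfolding vle_def
      using al last1[OF r1] dimal by auto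
  next
    fix p assume p: "p \<in> {1..<d}"
    show "vle n (al (p+1)) (al p)" unfolding vle_def
      using al step1[OF r1, of "p-1"] p by auto
  qed
  have A2: "(\<forall>i<n. 0 < al 1 $ i) \<and>
                  (\<forall>p\<in>{1..<d}. vle n (al p) (al (p+1))) \<and> vle n (al d) (r \<cdot>\<^sub>v al 1)" if r1: "r \<ge> 1"
  proof (intro conjI ballI allI impI)
    fix i assume i: "i < n"
    show "0 < al 1 $ i" using al[OF i] xpos[of 0 i] d1 i by simp
  next
    show "vle n (al d) (r \<cdot>\<^sub>v al 1)" unfolding vle_def
      using al last2[OF r1] dimal by auto
  next
    fix p assume p: "p \<in> {1..<d}"
    show "vle n (al p) (al (p+1))" unfolding vle_def
      using al step2[OF r1, of "p-1"] p by auto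
  qed
  show ?thesis unfolding T_def[symmetric] r_def[symmetric] Let_def
    by (rule exI[of _ y]) (use eig ypos A1 A2 in \<open>simp add: al_def\<close>)
qed


end
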